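(* For each $\lambda\ge0$, each $j,k\in\{1,\dots,N\}$ and each $i\in\{1,\dots,|K_j|\}$, $$\det(I-H(\lambda))=\det(I-D(\lambda)),\qquad \det\big((I-H(\lambda))_{j,k}\big)=\det\big((I-D(\lambda))_{j,k}\big),$$ $$(-1)^{L(j)+i+k}\det\big((I-H(\lambda))_{L(j)+i,k}\big)=(-1)^{j+k}m_{j,L(j)+i}\,G_j^*(\lambda)\det\big((I-D(\lambda))_{j,k}\big),$$ where for a square matrix $A$, $A_{r,s}$ denotes the matrix obtained by deleting the $r$-th row and $s$-th column.
   Context: CBP setting. Let $S$ be a finite or countable set and $\eta$ an irreducible continuous-time Markov chain on $S$ with conservative infinitesimal matrix $Q=(q(x,y))$ ($q(x,y)\ge0$ for $x\ne y$, $q(x,x)\in(-\infty,0)$, row sums $0$). Fix distinct $W=\{w_1,\dots,w_N\}\subset S$, and for $k=1,\dots,N$ numbers $\beta_k>0$, $\alpha_k\in[0,1)$, and generating functions $f_k$ of nonnegative integer random variables with $f_k'(1)<\infty$. Hitting times under taboo: for $x,y\in S$, $H\subset S$, ${}_H\overline\tau_{x,y}$ is the time spent by $\eta$ started at $x$, after leaving $x$, until first hitting $y$ if $H$ is not visited before; otherwise $\infty$. ${}_H\overline F_{x,y}(t)$ is its improper distribution function, ${}_H\overline F_{x,y}(\infty)$ its limit, ${}_H\overline F^*_{x,y}(\lambda)=\int_{0-}^\infty e^{-\lambda t}d\,{}_H\overline F_{x,y}(t)$. $W_k=W\setminus\{w_k\}$. $D(\lambda)=(d_{i,j}(\lambda))_{i,j=1}^N$,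 $d_{i,j}(\lambda)=\delta_{i,j}\alpha_if_i'(1)G_i^*(\lambda)+(1-\alpha_i)G_i^*(\lambda){}_{W_j}\overline F^*_{w_i,w_j}(\lambda)$, $G_i^*(\lambda)=\beta_i/(\lambda+\beta_i)$. $K_j=\{k:{}_{W_k}\overline F_{w_j,w_k}(\infty)-{}_{W_k}\overline F_{w_j,w_k}(0)>0\}=\{k(1,j)<\dots<k(|K_j|,j)\}$, $L=N+\sum_j|K_j|$, $L(j)=N+\sum_{l<j}|K_l|$, $T_{i,j}(t)={}_{W_{k(i,j)}}\overline F_{w_j,w_{k(i,j)}}(t)-{}_{W_{k(i,j)}}\overline F_{w_j,w_{k(i,j)}}(0)$. The $L\times L$ matrix $M=(m_{k,l})$: $m_{k,l}=\delta_{k,l}\alpha_kf_k'(1)+(1-\alpha_k){}_{W_l}\overline F_{w_k,w_l}(0)$ for $k,l\le N$; $m_{j,L(j)+i}=(1-\alpha_j)T_{i,j}(\infty)$; $m_{L(j)+i,k(i,j)}=1$; all other entries $0$. $G_j(t)=1-e^{-\beta_jt}$ ($j\le N$), $G_{L(j)+i}(t)=T_{i,j}(t)/T_{i,j}(\infty)$, $G_r^*$ their Laplace–Stieltjes transforms, and $H(\lambda)=(G_r^*(\lambda)m_{r,s})_{r,s=1}^L$. *)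

theory Defs
  imports "HOL-Probability.Probability_Mass_Function" "Jordan_Normal_Form.Determinant"
begin

text \<open>Indices of W are 1..N.
  Fb i j t stands for the improper distribution function of the taboo hitting
  time with taboo set W_j from w_i to w_j (t real; Fb i j t = 0 for t < 0).\<close>

definition improper_df :: "(real \<Rightarrow> real) \<Rightarrow> bool" where
  "improper_df F \<longleftrightarrow> mono F \<and> (\<forall>t<0. F t = 0) \<and> (\<forall>t. F t \<le> 1)
     \<and> (\<forall>t. continuous (at_right t) F)"

definition F_inf :: "(real \<Rightarrow> real) \<Rightarrow> real" where
  "F_inf F = Lim at_top F"

text \<open>Laplace-Stieltjes transform: integral from 0- to infinity of exp(-lam t) dF(t).\<close>
definition LST :: "(real \<Rightarrow> real) \<Rightarrow> real \<Rightarrow> real" where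
  "LST F lam = (\<integral>t. exp (- lam * t) \<partial>(interval_measure F))"

definition Gexp_star :: "(nat \<Rightarrow> real) \<Rightarrow> nat \<Rightarrow> real \<Rightarrow> real" where
  "Gexp_star \<beta> i lam = \<beta> i / (lam + \<beta> i)"

text \<open>f_k'(1) = mean of the offspring distribution p k.\<close>
definition fd :: "(nat \<Rightarrow> nat pmf) \<Rightarrow> nat \<Rightarrow> real" where
  "fd p k = measure_pmf.expectation (p k) real"

definition Dent :: "(nat \<Rightarrow> real) \<Rightarrow> (nat \<Rightarrow> real) \<Rightarrow> (nat \<Rightarrow> nat pmf)
    \<Rightarrow> (nat \<Rightarrow> nat \<Rightarrow> real \<Rightarrow> real) \<Rightarrow> real \<Rightarrow> nat \<Rightarrow> nat \<Rightarrow> real" where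
  "Dent \<alpha> \<beta> p Fb lam i j =
     (if i = j then \<alpha> i * fd p i * Gexp_star \<beta> i lam else 0)
     + (1 - \<alpha> i) * Gexp_star \<beta> i lam * LST (Fb i j) lam"

definition Kset :: "nat \<Rightarrow> (nat \<Rightarrow> nat \<Rightarrow> real \<Rightarrow> real) \<Rightarrow> nat \<Rightarrow> nat set" where
  "Kset N Fb j = {k \<in> {1..N}. F_inf (Fb j k) - Fb j k 0 > 0}"

definition kidx :: "nat \<Rightarrow> (nat \<Rightarrow> nat \<Rightarrow> real \<Rightarrow> real) \<Rightarrow> nat \<Rightarrow> nat \<Rightarrow> nat" where
  "kidx N Fb i j = sorted_list_of_set (Kset N Fb j) ! (i - 1)"

definition Lidx :: "nat \<Rightarrow> (nat \<Rightarrow> nat \<Rightarrow> real \<Rightarrow> real) \<Rightarrow> nat \<Rightarrow> nat" where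
  "Lidx N Fb j = N + (\<Sum>l\<in>{1..<j}. card (Kset N Fb l))"

definition Ltot :: "nat \<Rightarrow> (nat \<Rightarrow> nat \<Rightarrow> real \<Rightarrow> real) \<Rightarrow> nat" where
  "Ltot N Fb = N + (\<Sum>l\<in>{1..N}. card (Kset N Fb l))"

definition Tfun :: "nat \<Rightarrow> (nat \<Rightarrow> nat \<Rightarrow> real \<Rightarrow> real) \<Rightarrow> nat \<Rightarrow> nat \<Rightarrow> real \<Rightarrow> real" where
  "Tfun N Fb i j t = Fb j (kidx N Fb i j) t - Fb j (kidx N Fb i j) 0"

definition Tinf :: "nat \<Rightarrow> (nat \<Rightarrow> nat \<Rightarrow> real \<Rightarrow> real) \<Rightarrow> nat \<Rightarrow> nat \<Rightarrow> real" where
  "Tinf N Fb i j = F_inf (Fb j (kidx N Fb i j)) - Fb j (kidx N Fb i j) 0"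

definition Gfun :: "nat \<Rightarrow> (nat \<Rightarrow> nat \<Rightarrow> real \<Rightarrow> real) \<Rightarrow> nat \<Rightarrow> nat \<Rightarrow> real \<Rightarrow> real" where
  "Gfun N Fb i j t = (if t < 0 then 0 else Tfun N Fb i j t / Tinf N Fb i j)"

definition isL :: "nat \<Rightarrow> (nat \<Rightarrow> nat \<Rightarrow> real \<Rightarrow> real) \<Rightarrow> nat \<Rightarrow> nat \<Rightarrow> nat \<Rightarrow> bool" where
  "isL N Fb r j i \<longleftrightarrow> j \<in> {1..N} \<and> i \<in> {1..card (Kset N Fb j)} \<and> r = Lidx N Fb j + i"

definition Ment :: "nat \<Rightarrow> (nat \<Rightarrow> real) \<Rightarrow> (nat \<Rightarrow> nat pmf)
    \<Rightarrow> (nat \<Rightarrow> nat \<Rightarrow> real \<Rightarrow> real) \<Rightarrow> nat \<Rightarrow> nat \<Rightarrow> real" where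
  "Ment N \<alpha> p Fb r s =
    (if r \<in> {1..N} \<and> s \<in> {1..N} then
        (if r = s then \<alpha> r * fd p r else 0) + (1 - \<alpha> r) * Fb r s 0
     else if r \<in> {1..N} \<and> (\<exists>i. isL N Fb s r i) then
        (1 - \<alpha> r) * Tinf N Fb (s - Lidx N Fb r) r
     else if (\<exists>j i. isL N Fb r j i \<and> s = kidx N Fb i j) then 1
     else 0)"

definition Gstar :: "nat \<Rightarrow> (nat \<Rightarrow> real) \<Rightarrow> (nat \<Rightarrow> nat \<Rightarrow> real \<Rightarrow> real) \<Rightarrow> nat \<Rightarrow> real \<Rightarrow> real" where
  "Gstar N \<beta> Fb r lam =
    (if r \<in> {1..N} then Gexp_star \<beta> r lam
     else (let (j, i) = (SOME (j, i). isL N Fb r j i) in LST (Gfun N Fb i j) lam))"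

text \<open>I - D(lam) as an N x N matrix (0-based storage of 1-based entries).\<close>
definition IminusD :: "nat \<Rightarrow> (nat \<Rightarrow> real) \<Rightarrow> (nat \<Rightarrow> real) \<Rightarrow> (nat \<Rightarrow> nat pmf)
    \<Rightarrow> (nat \<Rightarrow> nat \<Rightarrow> real \<Rightarrow> real) \<Rightarrow> real \<Rightarrow> real mat" where
  "IminusD N \<alpha> \<beta> p Fb lam =
     mat N N (\<lambda>(r, s). (if r = s then 1 else 0) - Dent \<alpha> \<beta> p Fb lam (r + 1) (s + 1))"

definition IminusH :: "nat \<Rightarrow> (nat \<Rightarrow> real) \<Rightarrow> (nat \<Rightarrow> real) \<Rightarrow> (nat \<Rightarrow> nat pmf)
    \<Rightarrow> (nat \<Rightarrow> nat \<Rightarrow> real \<Rightarrow> real) \<Rightarrow> real \<Rightarrow> real mat" where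
  "IminusH N \<alpha> \<beta> p Fb lam =
     mat (Ltot N Fb) (Ltot N Fb) (\<lambda>(r, s). (if r = s then 1 else 0)
        - Gstar N \<beta> Fb (r + 1) lam * Ment N \<alpha> p Fb (r + 1) (s + 1))"

end

theory Submission imports Defs "HOL-Probability.Distribution_Functions" begin
lemma schur_det:
  fixes X :: "real mat"
  assumes X: "X \<in> carrier_mat (n+m) (n+m)"
    and id: "\<And>r s. n \<le> r \<Longrightarrow> r < n+m \<Longrightarrow> n \<le> s \<Longrightarrow> s < n+m \<Longrightarrow> X$$(r,s) = (if r=s then 1 else 0)"
  shows "det X = det (mat n n (\<lambda>(r,s). X$$(r,s) - (\<Sum>t\<in>{n..<n+m}. X$$(r,t) * X$$(t,s))))"
proof -
  define S where "S = mat n n (\<lambda>(r,s). X$$(r,s) - (\<Sum>t\<in>{n..<n+m}. X$$(r,t) * X$$(t,s)))"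
  define E where "E = mat (n+m) (n+m) (\<lambda>(r,s). if r<n \<and> n \<le> s then X$$(r,s) else if r=s then 1 else (0::real))"
  define C where "C = mat m n (\<lambda>(r,s). X$$(r+n,s))"
  define X' where "X' = four_block_mat S (0\<^sub>m n m) C (1\<^sub>m m)"
  have S: "S \<in> carrier_mat n n" and C: "C \<in> carrier_mat m n" unfolding S_def C_def by auto
  have E: "E \<in> carrier_mat (n+m) (n+m)" unfolding E_def by auto
  have X'c: "X' \<in> carrier_mat (n+m) (n+m)" unfolding X'_def using S by auto
  have X'e: "X' $$ (t,s) = (if t < n then (if s < n then S$$(t,s) else 0) else X$$(t,s))"
    if "t < n+m" "s < n+m" for t s
    using that S C id[of t s] unfolding X'_def by (auto simp: C_def)
  have prod: "E * X' = X"
  proof (rule eq_matI)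
    fix r s assume r: "r < dim_row X" and s: "s < dim_col X"
    then have r': "r < n+m" and s': "s < n+m" using X by auto
    have "(E * X') $$ (r,s) = (\<Sum>t<n+m. E$$(r,t) * X'$$(t,s))"
      using E X'c r' s' by (simp add: scalar_prod_def row_def col_def sum.atLeast0_lessThan_Suc lessThan_atLeast0)
    also have "\<dots> = (\<Sum>t\<in>{0..<n}. E$$(r,t) * X'$$(t,s)) + (\<Sum>t\<in>{n..<n+m}. E$$(r,t) * X'$$(t,s))"
      by (simp add: lessThan_atLeast0 sum.atLeastLessThan_concat)
    also have "\<dots> = X$$(r,s)"
    proof (cases "r < n")
      case True
      have 1: "(\<Sum>t\<in>{0..<n}. E$$(r,t) * X'$$(t,s)) = X'$$(r,s)"
      proof -
        have "(\<Sum>t\<in>{0..<n}. E$$(r,t) * X'$$(t,s)) = (\<Sum>t\<in>{0..<n}. if t = r then X'$$(r,s) else 0)"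
          using True s' by (intro sum.cong) (auto simp: E_def)
        then show ?thesis using True by simp
      qed
      have 2: "(\<Sum>t\<in>{n..<n+m}. E$$(r,t) * X'$$(t,s)) = (\<Sum>t\<in>{n..<n+m}. X$$(r,t) * X$$(t,s))"
        using True s' by (intro sum.cong) (auto simp: E_def X'e)
      show ?thesis
      proof (cases "s < n")
        case True
        then show ?thesis using 1 2 `r<n` by (simp add: X'e S_def)
      next
        case False
        have "(\<Sum>t\<in>{n..<n+m}. X$$(r,t) * X$$(t,s)) = (\<Sum>t\<in>{n..<n+m}. if t = s then X$$(r,s) else 0)"
          using False s' by (intro sum.cong) (auto simp: id)
        also have "\<dots> = X$$(r,s)" using False s' by simp
        finally show ?thesis using 1 2 `r<n` False s' by (simp add: X'e)
      qed
    next
      case False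
      have 1: "(\<Sum>t\<in>{0..<n}. E$$(r,t) * X'$$(t,s)) = 0"
        using False r' by (intro sum.neutral) (auto simp: E_def)
      have 2: "(\<Sum>t\<in>{n..<n+m}. E$$(r,t) * X'$$(t,s)) = X'$$(r,s)"
      proof -
        have "(\<Sum>t\<in>{n..<n+m}. E$$(r,t) * X'$$(t,s)) = (\<Sum>t\<in>{n..<n+m}. if t = r then X'$$(r,s) else 0)"
          using False r' s' by (intro sum.cong) (auto simp: E_def)
        then show ?thesis using False r' by simp
      qed
      show ?thesis using 1 2 False r' s' by (simp add: X'e)
    qed
    finally show "(E * X') $$ (r,s) = X$$(r,s)" .
  qed (use E X X'c in auto)
  have dE: "det E = 1"
  proof -
    have "det E = prod_list (diag_mat E)"
      by (rule det_upper_triangular[OF _ E]) (auto simp: upper_triangular_def E_def)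
    also have "diag_mat E = replicate (n+m) 1" unfolding diag_mat_def using E
      by (auto simp: E_def intro!: nth_equalityI)
    also have "prod_list (replicate (n+m) (1::real)) = 1" by simp
    finally show ?thesis .
  qed
  have dX': "det X' = det S"
    unfolding X'_def by (subst det_four_block_mat_upper_right_zero[OF S refl C]) auto
  have "det X = det E * det X'" using det_mult[OF E X'c] prod by simp
  then show ?thesis using dE dX' by (simp add: S_def)
qed

lemma cofactor_replace_row:
  fixes A :: "real mat"
  assumes A: "A \<in> carrier_mat n n" and a: "a < n" and b: "b < n"
  shows "det (mat n n (\<lambda>(i,j). if i = a then (if j = b then 1 else 0) else A$$(i,j))) = cofactor A a b"
proof -
  define A' where "A' = mat n n (\<lambda>(i,j). if i = a then (if j = b then 1 else 0) else A$$(i,j))"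
  have A'c: "A' \<in> carrier_mat n n" unfolding A'_def by auto
  have del: "mat_delete A' a b = mat_delete A a b"
    using A by (intro eq_matI) (auto simp: mat_delete_def A'_def)
  have "det A' = (\<Sum>j<n. A' $$ (a,j) * cofactor A' a j)"
    by (rule laplace_expansion_row[OF A'c a])
  also have "\<dots> = (\<Sum>j<n. if j = b then cofactor A' a b else 0)"
    using a by (intro sum.cong) (auto simp: A'_def)
  also have "\<dots> = cofactor A' a b" using b by simp
  also have "\<dots> = cofactor A a b" unfolding cofactor_def del ..
  finally show ?thesis unfolding A'_def .
qed

lemma cofactor_col_zero:
  fixes A :: "real mat"
  assumes A: "A \<in> carrier_mat n n" and k: "k < n" and s: "s < n" and sk: "s \<noteq> k"
  shows "(\<Sum>i<n. A$$(i,s) * cofactor A i k) = 0"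
proof -
  define A' where "A' = mat n n (\<lambda>(i,j). if j = k then A$$(i,s) else A$$(i,j))"
  have A'c: "A' \<in> carrier_mat n n" unfolding A'_def by auto
  have del: "mat_delete A' i k = mat_delete A i k" for i
    using A by (intro eq_matI) (auto simp: mat_delete_def A'_def)
  have "det A' = 0"
    by (rule det_identical_columns[OF A'c sk[symmetric] k s]) (use A in \<open>auto simp: A'_def col_def k s sk intro!: eq_vecI\<close>)
  moreover have "det A' = (\<Sum>i<n. A' $$ (i,k) * cofactor A' i k)"
    by (rule laplace_expansion_column[OF A'c k])
  moreover have "\<dots> = (\<Sum>i<n. A$$(i,s) * cofactor A i k)"
    using k by (intro sum.cong refl) (simp only: cofactor_def del, simp add: A'_def)
  ultimately show ?thesis by simp
qed
lemma idf_basic: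
  assumes F: "improper_df F"
  shows "\<And>x y. x \<le> y \<Longrightarrow> F x \<le> F y" and "\<And>t. t < 0 \<Longrightarrow> F t = 0"
    and "\<And>t. 0 \<le> F t" and "\<And>a. continuous (at_right a) F"
    and "(F \<longlongrightarrow> 0) at_bot" and "(F \<longlongrightarrow> F_inf F) at_top"
    and "\<And>t. F t \<le> F_inf F" and "0 \<le> F_inf F"
proof -
  show mono: "\<And>x y. x \<le> y \<Longrightarrow> F x \<le> F y" using F unfolding improper_df_def mono_def by blast
  show neg: "\<And>t. t < 0 \<Longrightarrow> F t = 0" using F unfolding improper_df_def by blast
  show nn: "\<And>t. 0 \<le> F t"
  proof -
    fix t :: real
    have "F (min t (-1)) \<le> F t" by (rule mono) simp
    moreover have "F (min t (-1)) = 0" by (rule neg) simp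
    ultimately show "0 \<le> F t" by simp
  qed
  show "\<And>a. continuous (at_right a) F" using F unfolding improper_df_def by blast
  show "(F \<longlongrightarrow> 0) at_bot"
    by (rule tendsto_eventually) (auto simp: eventually_at_bot_linorder intro!: exI[of _ "-1"] neg)
  have le1: "\<And>t. F t \<le> 1" using F unfolding improper_df_def by blast
  have bdd: "bdd_above (range F)" using le1 by (auto intro!: bdd_aboveI)
  have lim: "(F \<longlongrightarrow> (SUP t. F t)) at_top"
  proof (rule order_tendstoI)
    fix y assume "y < (SUP t. F t)"
    then obtain x where "y < F x" using less_cSUP_iff[of UNIV F y] bdd by auto
    then show "\<forall>\<^sub>F t in at_top. y < F t"
      unfolding eventually_at_top_linorder using mono by (meson less_le_trans)
  next
    fix y assume "(SUP t. F t) < y"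
    then show "\<forall>\<^sub>F t in at_top. F t < y"
      using cSUP_upper[OF _ bdd] by (auto intro!: always_eventually) (meson UNIV_I le_less_trans)
  qed
  have eq: "F_inf F = (SUP t. F t)"
    unfolding F_inf_def by (rule tendsto_Lim[OF _ lim]) simp
  show "(F \<longlongrightarrow> F_inf F) at_top" using lim eq by simp
  show "\<And>t. F t \<le> F_inf F" unfolding eq using cSUP_upper[OF _ bdd] by simp
  then show "0 \<le> F_inf F" using nn order_trans by blast
qed

lemma LST_base:
  assumes F: "improper_df F" and lam: "lam \<ge> 0"
  shows "LST F lam = F 0 + (\<integral>t. indicator {0<..} t * exp (- lam * t) \<partial>interval_measure F)"
    and "finite_measure (interval_measure F)"
    and "\<And>x. measure (interval_measure F) {..x} = F x"
    and "measure (interval_measure F) UNIV = F_inf F"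
proof -
  note b = idf_basic[OF F]
  let ?M = "interval_measure F"
  have fb: "finite_borel_measure ?M"
    by (rule finite_borel_measure_interval_measure[OF b(1) b(4) b(5) b(6) b(8)])
  interpret finite_borel_measure ?M by (rule fb)
  show "finite_measure ?M" by unfold_locales
  show Iic: "\<And>x. measure ?M {..x} = F x"
    by (rule measure_interval_measure_Iic[OF b(1) b(4) b(5)])
  show "measure ?M UNIV = F_inf F"
    using interval_measure_UNIV[OF b(1) b(4) b(5) b(6) b(8)] b(8) by (simp add: measure_def)
  have null: "{..<0::real} \<in> null_sets ?M"
  proof -
    have "(\<Union>n::nat. {..- 1 / Suc n}) \<in> null_sets ?M"
    proof (rule null_sets_UN)
      fix n :: nat
      have "emeasure ?M {..- 1 / Suc n} = F (- 1 / Suc n)"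
        by (rule emeasure_interval_measure_Iic[OF b(1) b(4) b(5)])
      also have "\<dots> = 0" using b(2)[of "- 1 / Suc n"] by simp
      finally show "{..- 1 / Suc n} \<in> null_sets ?M" by (simp add: null_sets_def)
    qed
    moreover have "(\<Union>n::nat. {..- 1 / Suc n}) = {..<0::real}"
    proof (auto)
      fix x :: real assume "x < 0"
      then obtain n :: nat where "1 / Suc n < - x"
        by (metis neg_0_less_iff_less nat_approx_posE)
      then show "\<exists>n::nat. x \<le> - (1 / (1 + real n))" by (auto intro!: exI[of _ n])
    qed (smt (verit) divide_pos_pos of_nat_0_le_iff)
    ultimately show ?thesis by simp
  qed
  have ae: "AE x in ?M. 0 \<le> x"
    using AE_not_in[OF null] by (simp add: not_less)
  have "LST F lam = (\<integral>t. indicator {..0} t + indicator {0<..} t * exp (- lam * t) \<partial>?M)"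
    unfolding LST_def
  proof (rule integral_cong_AE)
    show "AE x in ?M. exp (- lam * x) = indicator {..0} x + indicator {0<..} x * exp (- lam * x)"
      using ae by eventually_elim (auto simp: indicator_def)
  qed auto
  also have "\<dots> = (\<integral>t. indicator {..0} t \<partial>?M) + (\<integral>t. indicator {0<..} t * exp (- lam * t) \<partial>?M)"
  proof (rule Bochner_Integration.integral_add)
    show "integrable ?M (indicator {..0::real} :: real \<Rightarrow> real)"
      by (rule integrable_const_bound[where B=1]) auto
    show "integrable ?M (\<lambda>t. indicator {0<..} t * exp (- lam * t) :: real)"
      by (rule integrable_const_bound[where B=1]) (use lam in \<open>auto simp: indicator_def mult_nonneg_nonneg\<close>)
  qed
  also have "(\<integral>t. indicator {..0} t \<partial>?M) = F 0"
    using Iic[of 0] by simp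
  finally show "LST F lam = F 0 + (\<integral>t. indicator {0<..} t * exp (- lam * t) \<partial>?M)" .
qed

lemma LST_const:
  assumes F: "improper_df F" and lam: "lam \<ge> 0" and c: "F_inf F - F 0 \<le> 0"
  shows "LST F lam = F 0"
proof -
  note b = idf_basic[OF F]
  let ?M = "interval_measure F"
  note B = LST_base[OF F lam]
  interpret finite_measure ?M by (rule B(2))
  have "measure ?M {0<..} = measure ?M UNIV - measure ?M {..0}"
  proof -
    have "{0<..} = UNIV - {..0::real}" by auto
    then show ?thesis by (simp add: finite_measure_Diff)
  qed
  also have "\<dots> = F_inf F - F 0" using B(3,4) by simp
  finally have "measure ?M {0<..} = 0" using c measure_nonneg[of ?M "{0<..}"] by linarith
  then have nul: "{0<..} \<in> null_sets ?M" by (simp add: null_sets_def emeasure_eq_measure)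
  have "AE x in ?M. indicator {0<..} x * exp (- lam * x) = (0::real)"
    using AE_not_in[OF nul] by eventually_elim (auto simp: indicator_def)
  then have "(\<integral>t. indicator {0<..} t * exp (- lam * t) \<partial>?M) = 0"
    by (rule integral_eq_zero_AE)
  then show ?thesis using B(1) by simp
qed

lemma LST_split:
  assumes F: "improper_df F" and lam: "lam \<ge> 0" and c: "F_inf F - F 0 > 0"
  shows "(F_inf F - F 0) * LST (\<lambda>t. if t < 0 then 0 else (F t - F 0) / (F_inf F - F 0)) lam
         = LST F lam - F 0"
proof -
  define c where "c = F_inf F - F 0"
  define G where "G = (\<lambda>t. if t < 0 then 0 else (F t - F 0) / c)"
  have c0: "c > 0" using c by (simp add: c_def)
  note b = idf_basic[OF F]
  let ?M = "interval_measure F"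
  let ?N = "interval_measure G"
  note B = LST_base[OF F lam]
  have Gmono: "\<And>x y. x \<le> y \<Longrightarrow> G x \<le> G y"
  proof -
    fix x y :: real assume "x \<le> y"
    then show "G x \<le> G y" using b(1)[of 0 y] b(1)[of x y] c0
      by (auto simp: G_def divide_right_mono)
  qed
  have Gcont: "\<And>a. continuous (at_right a) G"
  proof -
    fix a :: real
    show "continuous (at_right a) G"
    proof (cases "a < 0")
      case True
      have ev: "\<forall>\<^sub>F x in at_right a. 0 = G x"
        unfolding eventually_at_right[OF True] using True by (auto simp: G_def intro!: exI[of _ 0])
      have "(G \<longlongrightarrow> 0) (at_right a)" by (rule tendsto_eventually) (use ev in \<open>auto elim: eventually_mono\<close>)
      then show ?thesis using True by (simp add: continuous_within G_def)
    next
      case False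
      have ev: "\<forall>\<^sub>F x in at_right a. (F x - F 0) / c = G x"
        using eventually_at_right_less[of a] by eventually_elim (use False in \<open>auto simp: G_def\<close>)
      have "((\<lambda>x. (F x - F 0) / c) \<longlongrightarrow> (F a - F 0) / c) (at_right a)"
        using b(4)[of a] c0 by (auto simp: continuous_within intro!: tendsto_intros)
      then have "(G \<longlongrightarrow> (F a - F 0) / c) (at_right a)" by (rule tendsto_cong[THEN iffD1, OF ev])
      then show ?thesis using False by (simp add: continuous_within G_def)
    qed
  qed
  have Gbot: "(G \<longlongrightarrow> 0) at_bot"
    by (rule tendsto_eventually) (auto simp: eventually_at_bot_linorder G_def intro!: exI[of _ "-1"])
  have Gtop: "(G \<longlongrightarrow> 1) at_top"
  proof -
    have ev: "\<forall>\<^sub>F x in at_top. (F x - F 0) / c = G x"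
      by (auto simp: G_def eventually_at_top_linorder intro!: exI[of _ 0])
    have "((\<lambda>x. (F x - F 0) / c) \<longlongrightarrow> (F_inf F - F 0) / c) at_top"
      using b(6) c0 by (auto intro!: tendsto_intros)
    then have "(G \<longlongrightarrow> (F_inf F - F 0) / c) at_top" by (rule tendsto_cong[THEN iffD1, OF ev])
    then show ?thesis using c0 by (simp add: c_def)
  qed
  have fbN: "finite_borel_measure ?N"
    using finite_borel_measure_interval_measure[OF Gmono Gcont Gbot Gtop] by simp
  have NIic: "\<And>x. measure ?N {..x} = G x"
    by (rule measure_interval_measure_Iic[OF Gmono Gcont Gbot])
  interpret M: finite_measure ?M by (rule B(2))
  define P where "P = density ?M (indicator {0<..})"
  define Q where "Q = density ?N (\<lambda>_. ennreal c)"
  have fbP: "finite_borel_measure P"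
    unfolding finite_borel_measure_def finite_borel_measure_axioms_def P_def
    by (auto intro!: M.finite_measure_restricted)
  have fbQ: "finite_borel_measure Q"
    unfolding finite_borel_measure_def finite_borel_measure_axioms_def Q_def
  proof
    interpret N: finite_borel_measure ?N by (rule fbN)
    show "finite_measure (density ?N (\<lambda>_. ennreal c))"
      by (rule finite_measureI) (simp add: emeasure_density_const ennreal_mult_eq_top_iff)
  qed simp
  have "cdf P = cdf Q"
  proof
    fix x :: real
    have cP: "cdf P x = (if x \<le> 0 then 0 else F x - F 0)"
    proof -
      have "cdf P x = measure ?M ({0<..} \<inter> {..x})" unfolding cdf_def P_def
        by (rule measure_restricted) auto
      also have "\<dots> = (if x \<le> 0 then 0 else F x - F 0)"
      proof (cases "x \<le> 0")
        case True
        then have "{0<..} \<inter> {..x} = {}" by auto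
        then show ?thesis using True by simp
      next
        case False
        then have "{0<..} \<inter> {..x} = {0<..x}" by auto
        then show ?thesis using False measure_interval_measure_Ioc[OF _ b(1) b(4), of 0 x] by simp
      qed
      finally show ?thesis .
    qed
    have cQ: "cdf Q x = c * G x"
      unfolding cdf_def Q_def using c0 NIic[of x] by (simp add: measure_density_const)
    show "cdf P x = cdf Q x"
      unfolding cP cQ using c0 b(2)[of x] by (auto simp: G_def)
  qed
  then have PQ: "P = Q" by (rule cdf_unique'[OF fbP fbQ])
  have "(\<integral>t. indicator {0<..} t * exp (- lam * t) \<partial>?M) = (\<integral>t. exp (- lam * t) \<partial>P)"
  proof -
    have "(\<integral>t. exp (- lam * t) \<partial>density ?M (\<lambda>x. ennreal (indicator {0<..} x))) =
          (\<integral>t. indicator {0<..} t *\<^sub>R exp (- lam * t) \<partial>?M)"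
      by (rule integral_density) auto
    moreover have "density ?M (\<lambda>x. ennreal (indicator {0<..} x)) = P"
      unfolding P_def by (simp add: ennreal_indicator)
    ultimately show ?thesis by simp
  qed
  also have "\<dots> = (\<integral>t. exp (- lam * t) \<partial>Q)" using PQ by simp
  also have "\<dots> = (\<integral>t. c *\<^sub>R exp (- lam * t) \<partial>?N)"
    unfolding Q_def by (rule integral_density) (use c0 in auto)
  also have "\<dots> = c * LST G lam" by (simp add: LST_def)
  finally have X: "(\<integral>t. indicator {0<..} t * exp (- lam * t) \<partial>?M) = c * LST G lam" .
  show ?thesis using B(1) X unfolding G_def c_def by simp
qed
lemma Kset_sub: "Kset N Fb j \<subseteq> {1..N}" and Kset_fin: "finite (Kset N Fb j)"
  unfolding Kset_def by (auto intro: finite_subset)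

lemma kidx_props:
  assumes i: "i \<in> {1..card (Kset N Fb j)}"
  shows "kidx N Fb i j \<in> Kset N Fb j"
  using i Kset_fin[of N Fb j] unfolding kidx_def
  by (metis atLeastAtMost_iff diff_less length_sorted_list_of_set less_le_trans nth_mem
      set_sorted_list_of_set zero_less_one less_one not_le)

lemma kidx_inj:
  assumes i: "i \<in> {1..card (Kset N Fb j)}" and i': "i' \<in> {1..card (Kset N Fb j)}"
    and eq: "kidx N Fb i j = kidx N Fb i' j"
  shows "i = i'"
proof -
  let ?xs = "sorted_list_of_set (Kset N Fb j)"
  have d: "distinct ?xs" by simp
  have l: "length ?xs = card (Kset N Fb j)" by simp
  have "i - 1 = i' - 1"
    using nth_eq_iff_index_eq[OF d, of "i - 1" "i' - 1"] eq i i' l unfolding kidx_def by auto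
  then show ?thesis using i i' by auto
qed

lemma kidx_surj:
  assumes b: "b \<in> Kset N Fb j"
  shows "\<exists>i\<in>{1..card (Kset N Fb j)}. kidx N Fb i j = b"
proof -
  let ?xs = "sorted_list_of_set (Kset N Fb j)"
  have "b \<in> set ?xs" using b Kset_fin[of N Fb j] by simp
  then obtain n where n: "n < length ?xs" "?xs ! n = b" by (auto simp: in_set_conv_nth)
  then show ?thesis unfolding kidx_def
    by (intro bexI[of _ "Suc n"]) auto
qed

lemma Lidx_mono:
  assumes j: "j \<in> {1..N}" and jj: "j < j'"
  shows "Lidx N Fb j + card (Kset N Fb j) \<le> Lidx N Fb j'"
proof -
  have "(\<Sum>l\<in>insert j {1..<j}. card (Kset N Fb l)) \<le> (\<Sum>l\<in>{1..<j'}. card (Kset N Fb l))"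
    by (rule sum_mono2) (use j jj in auto)
  then show ?thesis unfolding Lidx_def by simp
qed

lemma Lidx_le:
  assumes j: "j \<in> {1..N}"
  shows "Lidx N Fb j + card (Kset N Fb j) \<le> Ltot N Fb"
proof -
  have "(\<Sum>l\<in>insert j {1..<j}. card (Kset N Fb l)) \<le> (\<Sum>l\<in>{1..N}. card (Kset N Fb l))"
    by (rule sum_mono2) (use j in auto)
  then show ?thesis unfolding Lidx_def Ltot_def by simp
qed

lemma isL_range:
  assumes "isL N Fb r j i"
  shows "N < r" "r \<le> Ltot N Fb"
  using assms Lidx_le[of j N Fb] unfolding isL_def Lidx_def by auto

lemma isL_unique:
  assumes a: "isL N Fb r j i" and b: "isL N Fb r j' i'"
  shows "j = j' \<and> i = i'"
proof -
  have "\<not> j < j'"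
  proof
    assume "j < j'"
    then have "Lidx N Fb j + card (Kset N Fb j) \<le> Lidx N Fb j'" using a Lidx_mono unfolding isL_def by blast
    then show False using a b unfolding isL_def by auto
  qed
  moreover have "\<not> j' < j"
  proof
    assume "j' < j"
    then have "Lidx N Fb j' + card (Kset N Fb j') \<le> Lidx N Fb j" using b Lidx_mono unfolding isL_def by blast
    then show False using a b unfolding isL_def by auto
  qed
  ultimately have "j = j'" by simp
  then show ?thesis using a b unfolding isL_def by auto
qed

lemma Gstar_isL:
  assumes "isL N Fb r j i"
  shows "Gstar N \<beta> Fb r lam = LST (Gfun N Fb i j) lam"
proof -
  have r: "r \<notin> {1..N}" using isL_range(1)[OF assms] by auto
  have "(SOME x. case x of (j, i) \<Rightarrow> isL N Fb r j i) = (j, i)"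
    by (rule some_equality) (use assms isL_unique in auto)
  then show ?thesis using r unfolding Gstar_def by auto
qed
lemma X_entry:
  "r < Ltot N Fb \<Longrightarrow> s < Ltot N Fb \<Longrightarrow> IminusH N \<alpha> \<beta> p Fb lam $$ (r,s)
     = (if r = s then 1 else 0) - Gstar N \<beta> Fb (r+1) lam * Ment N \<alpha> p Fb (r+1) (s+1)"
  by (simp add: IminusH_def)

lemma Ltot_ge: "N \<le> Ltot N Fb" by (simp add: Ltot_def)

lemma XNN:
  assumes "a < N" "b < N"
  shows "IminusH N \<alpha> \<beta> p Fb lam $$ (a,b) = (if a = b then 1 else 0)
     - Gexp_star \<beta> (a+1) lam * ((if a = b then \<alpha> (a+1) * fd p (a+1) else 0) + (1 - \<alpha> (a+1)) * Fb (a+1) (b+1) 0)"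
  using assms Ltot_ge[of N Fb] by (simp add: X_entry Gstar_def Ment_def)

lemma kidx_le: "isL N Fb r j i \<Longrightarrow> kidx N Fb i j \<in> {1..N}"
  using kidx_props[of i N Fb j] Kset_sub[of N Fb j] unfolding isL_def by auto

lemma XLL:
  assumes "N \<le> r" "r < Ltot N Fb" "N \<le> s" "s < Ltot N Fb"
  shows "IminusH N \<alpha> \<beta> p Fb lam $$ (r,s) = (if r = s then 1 else 0)"
proof -
  have "Ment N \<alpha> p Fb (r+1) (s+1) = 0"
    unfolding Ment_def using assms kidx_le[of N Fb "r+1"] by fastforce
  then show ?thesis using assms by (simp add: X_entry)
qed

lemma XNL:
  assumes "a < N" "N \<le> r" "r < Ltot N Fb"
  shows "IminusH N \<alpha> \<beta> p Fb lam $$ (a,r) = (if \<exists>i. isL N Fb (r+1) (a+1) i then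
     - (Gexp_star \<beta> (a+1) lam * ((1 - \<alpha> (a+1)) * Tinf N Fb (r + 1 - Lidx N Fb (a+1)) (a+1))) else 0)"
proof -
  have "\<not> isL N Fb (a+1) j i" for j i using isL_range(1)[of N Fb "a+1" j i] assms by auto
  then show ?thesis using assms by (auto simp: X_entry Gstar_def Ment_def)
qed

lemma XLN:
  assumes L: "isL N Fb (r+1) j i" and b: "b < N"
  shows "IminusH N \<alpha> \<beta> p Fb lam $$ (r,b) =
     - (LST (Gfun N Fb i j) lam * (if b + 1 = kidx N Fb i j then 1 else 0))"
proof -
  have r: "N \<le> r" "r < Ltot N Fb" using isL_range[OF L] by auto
  have ex: "(\<exists>j' i'. isL N Fb (r+1) j' i' \<and> b+1 = kidx N Fb i' j') \<longleftrightarrow> b + 1 = kidx N Fb i j"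
    using isL_unique[OF L] L by blast
  have "Ment N \<alpha> p Fb (r+1) (b+1) = (if b + 1 = kidx N Fb i j then 1 else 0)"
    unfolding Ment_def using r ex by auto
  then show ?thesis using r b Gstar_isL[OF L] Ltot_ge[of N Fb] by (simp add: X_entry)
qed
lemma schur_sum:
  assumes a: "a < N" and b: "b < N" and lam: "lam \<ge> 0"
    and Fdf: "improper_df (Fb (a+1) (b+1))"
  shows "(\<Sum>t\<in>{N..<Ltot N Fb}. IminusH N \<alpha> \<beta> p Fb lam $$ (a,t) * IminusH N \<alpha> \<beta> p Fb lam $$ (t,b))
    = Gexp_star \<beta> (a+1) lam * (1 - \<alpha> (a+1)) * (LST (Fb (a+1) (b+1)) lam - Fb (a+1) (b+1) 0)"
proof -
  define X where "X = IminusH N \<alpha> \<beta> p Fb lam"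
  define j where "j = a + 1"
  define k where "k = b + 1"
  define F where "F = Fb j k"
  define g where "g = Gexp_star \<beta> j lam"
  have jN: "j \<in> {1..N}" and kN: "k \<in> {1..N}" using a b by (auto simp: j_def k_def)
  have f_isL: "X$$(a,t) * X$$(t,b) = g * (1 - \<alpha> j) * Tinf N Fb i j * LST (Gfun N Fb i j) lam
       * (if k = kidx N Fb i j then 1 else 0)"
    if L: "isL N Fb (t+1) j i" for t i
  proof -
    have t: "N \<le> t" "t < Ltot N Fb" using isL_range[OF L] by auto
    have "t + 1 - Lidx N Fb j = i" using L unfolding isL_def by auto
    then have "X$$(a,t) = - (g * ((1 - \<alpha> j) * Tinf N Fb i j))"
      unfolding X_def using XNL[OF a t, of \<alpha> \<beta> p lam] L by (auto simp: j_def g_def)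
    moreover have "X$$(t,b) = - (LST (Gfun N Fb i j) lam * (if k = kidx N Fb i j then 1 else 0))"
      unfolding X_def k_def by (rule XLN[OF L b])
    ultimately show ?thesis by simp
  qed
  have f_not: "X$$(a,t) * X$$(t,b) = 0" if "N \<le> t" "t < Ltot N Fb" "\<not> (\<exists>i. isL N Fb (t+1) j i)" for t
    using XNL[OF a that(1,2), of \<alpha> \<beta> p lam] that(3) by (simp add: X_def j_def)
  show ?thesis
  proof (cases "k \<in> Kset N Fb j")
    case True
    obtain i0 where i0: "i0 \<in> {1..card (Kset N Fb j)}" "kidx N Fb i0 j = k"
      using kidx_surj[OF True] by blast
    define t0 where "t0 = Lidx N Fb j + i0 - 1"
    have L0: "isL N Fb (t0+1) j i0" using jN i0 unfolding isL_def t0_def by auto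
    have t0: "t0 \<in> {N..<Ltot N Fb}" using isL_range[OF L0] by auto
    have "(\<Sum>t\<in>{N..<Ltot N Fb}. X$$(a,t) * X$$(t,b)) = (\<Sum>t\<in>{N..<Ltot N Fb}. if t = t0 then X$$(a,t0) * X$$(t0,b) else 0)"
    proof (rule sum.cong[OF refl])
      fix t assume t: "t \<in> {N..<Ltot N Fb}"
      show "X$$(a,t) * X$$(t,b) = (if t = t0 then X$$(a,t0) * X$$(t0,b) else 0)"
      proof (cases "t = t0")
        case False
        show ?thesis
        proof (cases "\<exists>i. isL N Fb (t+1) j i")
          case True
          then obtain i where L: "isL N Fb (t+1) j i" by blast
          have "kidx N Fb i j \<noteq> k"
          proof
            assume "kidx N Fb i j = k"
            then have "i = i0" using kidx_inj[of i N Fb j i0] L i0 unfolding isL_def by auto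
            then show False using L L0 False unfolding isL_def by auto
          qed
          then show ?thesis using f_isL[OF L] False by auto
        qed (use f_not t False in auto)
      qed simp
    qed
    also have "\<dots> = X$$(a,t0) * X$$(t0,b)" using t0 by simp
    also have "\<dots> = g * (1 - \<alpha> j) * (Tinf N Fb i0 j * LST (Gfun N Fb i0 j) lam)"
      using f_isL[OF L0] i0 by simp
    also have "Tinf N Fb i0 j * LST (Gfun N Fb i0 j) lam = LST F lam - F 0"
    proof -
      have pos: "F_inf F - F 0 > 0" using True unfolding Kset_def F_def by auto
      have "Tinf N Fb i0 j = F_inf F - F 0" unfolding Tinf_def F_def i0(2) ..
      moreover have "Gfun N Fb i0 j = (\<lambda>t. if t < 0 then 0 else (F t - F 0) / (F_inf F - F 0))"
        unfolding Gfun_def Tfun_def Tinf_def F_def i0(2) ..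
      ultimately show ?thesis using LST_split[of F lam] Fdf lam pos by (simp add: F_def j_def k_def)
    qed
    finally show ?thesis by (simp add: X_def g_def F_def j_def k_def)
  next
    case False
    have "(\<Sum>t\<in>{N..<Ltot N Fb}. X$$(a,t) * X$$(t,b)) = 0"
    proof (rule sum.neutral, rule ballI)
      fix t assume t: "t \<in> {N..<Ltot N Fb}"
      show "X$$(a,t) * X$$(t,b) = 0"
      proof (cases "\<exists>i. isL N Fb (t+1) j i")
        case True
        then obtain i where L: "isL N Fb (t+1) j i" by blast
        have "kidx N Fb i j \<noteq> k" using kidx_props[of i N Fb j] L False unfolding isL_def by auto
        then show ?thesis using f_isL[OF L] by auto
      qed (use f_not t in auto)
    qed
    moreover have "LST F lam = F 0"
    proof (rule LST_const)
      show "improper_df F" using Fdf by (simp add: F_def j_def k_def)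
      show "F_inf F - F 0 \<le> 0" using False kN unfolding Kset_def F_def by auto
    qed (rule lam)
    ultimately show ?thesis by (simp add: X_def F_def j_def k_def)
  qed
qed

theorem lemma2:
  fixes N :: nat and \<alpha> \<beta> :: "nat \<Rightarrow> real" and p :: "nat \<Rightarrow> nat pmf"
    and Fb :: "nat \<Rightarrow> nat \<Rightarrow> real \<Rightarrow> real" and lam :: real
  assumes beta_pos: "\<And>k. k \<in> {1..N} \<Longrightarrow> \<beta> k > 0"
    and alpha: "\<And>k. k \<in> {1..N} \<Longrightarrow> 0 \<le> \<alpha> k \<and> \<alpha> k < 1"
    and mean_fin: "\<And>k. k \<in> {1..N} \<Longrightarrow> integrable (measure_pmf (p k)) real"
    and Fb_df: "\<And>i j. i \<in> {1..N} \<Longrightarrow> j \<in> {1..N} \<Longrightarrow> improper_df (Fb i j)"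
    and lam: "lam \<ge> 0"
  shows "det (IminusH N \<alpha> \<beta> p Fb lam) = det (IminusD N \<alpha> \<beta> p Fb lam)
    \<and> (\<forall>j\<in>{1..N}. \<forall>k\<in>{1..N}.
         det (mat_delete (IminusH N \<alpha> \<beta> p Fb lam) (j - 1) (k - 1))
       = det (mat_delete (IminusD N \<alpha> \<beta> p Fb lam) (j - 1) (k - 1)))
    \<and> (\<forall>j\<in>{1..N}. \<forall>k\<in>{1..N}. \<forall>i\<in>{1..card (Kset N Fb j)}.
         (-1) ^ (Lidx N Fb j + i + k)
           * det (mat_delete (IminusH N \<alpha> \<beta> p Fb lam) (Lidx N Fb j + i - 1) (k - 1))
       = (-1) ^ (j + k) * Ment N \<alpha> p Fb j (Lidx N Fb j + i) * Gexp_star \<beta> j lam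
           * det (mat_delete (IminusD N \<alpha> \<beta> p Fb lam) (j - 1) (k - 1)))"
proof -
  define X where "X = IminusH N \<alpha> \<beta> p Fb lam"
  define Y where "Y = IminusD N \<alpha> \<beta> p Fb lam"
  define m where "m = (\<Sum>l\<in>{1..N}. card (Kset N Fb l))"
  have Lt: "Ltot N Fb = N + m" by (simp add: Ltot_def m_def)
  have Xc: "X \<in> carrier_mat (N+m) (N+m)" unfolding X_def IminusH_def Lt by simp
  have Yc: "Y \<in> carrier_mat N N" by (simp add: Y_def IminusD_def)
  have XLL': "X$$(r,s) = (if r = s then 1 else 0)"
    if "N \<le> r" "r < N+m" "N \<le> s" "s < N+m" for r s
    unfolding X_def by (rule XLL) (use that Lt in auto)
  have schurY: "X$$(r,s) - (\<Sum>t\<in>{N..<N+m}. X$$(r,t) * X$$(t,s)) = Y$$(r,s)"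
    if r: "r < N" and s: "s < N" for r s
  proof -
    have Fdf: "improper_df (Fb (r+1) (s+1))" using Fb_df r s by auto
    define G where "G = Gexp_star \<beta> (r+1) lam"
    define A where "A = \<alpha> (r+1)"
    define F0 where "F0 = Fb (r+1) (s+1) 0"
    define LS where "LS = LST (Fb (r+1) (s+1)) lam"
    define e where "e = (if r = s then \<alpha> (r+1) * fd p (r+1) else 0)"
    define d where "d = (if r = s then 1 else (0::real))"
    have S: "(\<Sum>t\<in>{N..<N+m}. X$$(r,t) * X$$(t,s)) = G * (1 - A) * (LS - F0)"
      using schur_sum[of r N s lam Fb \<alpha> \<beta> p, OF r s lam Fdf] unfolding X_def Lt G_def A_def LS_def F0_def .
    have X1: "X$$(r,s) = d - G * (e + (1 - A) * F0)"
      unfolding X_def d_def G_def e_def A_def F0_def by (rule XNN[OF r s])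
    have D: "Dent \<alpha> \<beta> p Fb lam (r+1) (s+1) = G * e + (1 - A) * G * LS"
      unfolding Dent_def G_def e_def A_def LS_def by auto
    have Y1: "Y$$(r,s) = d - Dent \<alpha> \<beta> p Fb lam (r+1) (s+1)"
      using r s by (simp add: Y_def IminusD_def d_def)
    have "d - G * (e + (1 - A) * F0) - G * (1 - A) * (LS - F0) = d - (G * e + (1 - A) * G * LS)"
      by (simp add: algebra_simps)
    then show ?thesis unfolding S X1 Y1 D .
  qed
  have c1: "det X = det Y"
  proof -
    have "det X = det (mat N N (\<lambda>(r,s). X$$(r,s) - (\<Sum>t\<in>{N..<N+m}. X$$(r,t) * X$$(t,s))))"
      by (rule schur_det[OF Xc XLL'])
    also have "mat N N (\<lambda>(r,s). X$$(r,s) - (\<Sum>t\<in>{N..<N+m}. X$$(r,t) * X$$(t,s))) = Y"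
      by (rule eq_matI) (use Yc schurY in auto)
    finally show ?thesis .
  qed
  have cof: "cofactor X a b = cofactor Y a b" if a: "a < N" and b: "b < N" for a b
  proof -
    define Xt where "Xt = mat (N+m) (N+m) (\<lambda>(i,j). if i = a then (if j = b then 1 else 0) else X$$(i,j))"
    have "cofactor X a b = det Xt"
      unfolding Xt_def by (rule cofactor_replace_row[OF Xc, symmetric]) (use a b in auto)
    have Xtc: "Xt \<in> carrier_mat (N+m) (N+m)" by (simp add: Xt_def)
    have XtLL: "Xt$$(r,s) = (if r = s then 1 else 0)"
      if "N \<le> r" "r < N+m" "N \<le> s" "s < N+m" for r s
      using that a XLL'[OF that] by (simp add: Xt_def)
    have "det Xt = det (mat N N (\<lambda>(r,s). Xt$$(r,s) - (\<Sum>t\<in>{N..<N+m}. Xt$$(r,t) * Xt$$(t,s))))"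
      by (rule schur_det[OF Xtc XtLL])
    also have "mat N N (\<lambda>(r,s). Xt$$(r,s) - (\<Sum>t\<in>{N..<N+m}. Xt$$(r,t) * Xt$$(t,s)))
        = mat N N (\<lambda>(i,j). if i = a then (if j = b then 1 else 0) else Y$$(i,j))"
    proof (rule eq_matI)
      fix r s assume "r < dim_row (mat N N (\<lambda>(i,j). if i = a then (if j = b then 1 else 0) else Y$$(i,j)))"
        "s < dim_col (mat N N (\<lambda>(i,j). if i = a then (if j = b then 1 else 0) else Y$$(i,j)))"
      then have r: "r < N" and s: "s < N" by auto
      show "mat N N (\<lambda>(r,s). Xt$$(r,s) - (\<Sum>t\<in>{N..<N+m}. Xt$$(r,t) * Xt$$(t,s))) $$ (r,s)
          = mat N N (\<lambda>(i,j). if i = a then (if j = b then 1 else 0) else Y$$(i,j)) $$ (r,s)"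
      proof (cases "r = a")
        case True
        have "(\<Sum>t\<in>{N..<N+m}. Xt$$(r,t) * Xt$$(t,s)) = 0"
          by (rule sum.neutral) (use True a b in \<open>auto simp: Xt_def\<close>)
        then show ?thesis using True r s by (simp add: Xt_def)
      next
        case False
        have "(\<Sum>t\<in>{N..<N+m}. Xt$$(r,t) * Xt$$(t,s)) = (\<Sum>t\<in>{N..<N+m}. X$$(r,t) * X$$(t,s))"
          by (rule sum.cong[OF refl]) (use False a r s in \<open>auto simp: Xt_def\<close>)
        then show ?thesis using False r s schurY[OF r s] by (simp add: Xt_def)
      qed
    qed auto
    also have "det \<dots> = cofactor Y a b" by (rule cofactor_replace_row[OF Yc a b])
    finally show ?thesis using \<open>cofactor X a b = det Xt\<close> by simp
  qed
  have c2: "det (mat_delete X (j - 1) (k - 1)) = det (mat_delete Y (j - 1) (k - 1))"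
    if j: "j \<in> {1..N}" and k: "k \<in> {1..N}" for j k
    using cof[of "j - 1" "k - 1"] j k by (auto simp: cofactor_def)
  have c3: "(-1) ^ (Lidx N Fb j + i + k) * det (mat_delete X (Lidx N Fb j + i - 1) (k - 1))
       = (-1) ^ (j + k) * Ment N \<alpha> p Fb j (Lidx N Fb j + i) * Gexp_star \<beta> j lam
           * det (mat_delete Y (j - 1) (k - 1))"
    if j: "j \<in> {1..N}" and k: "k \<in> {1..N}" and i: "i \<in> {1..card (Kset N Fb j)}" for j k i
  proof -
    define a where "a = j - 1"
    define k0 where "k0 = k - 1"
    define s0 where "s0 = Lidx N Fb j + i - 1"
    define M where "M = Ment N \<alpha> p Fb j (Lidx N Fb j + i)"
    define g where "g = Gexp_star \<beta> j lam"
    have a: "a < N" "a + 1 = j" using j by (auto simp: a_def)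
    have k0: "k0 < N" using k by (auto simp: k0_def)
    have L: "isL N Fb (s0+1) j i" using j i unfolding isL_def s0_def by auto
    have s0: "N \<le> s0" "s0 < N + m" using isL_range[OF L] Lt by auto
    have "(\<Sum>r<N+m. X$$(r,s0) * cofactor X r k0) = 0"
      by (rule cofactor_col_zero[OF Xc]) (use k0 s0 in auto)
    moreover have "(\<Sum>r<N+m. X$$(r,s0) * cofactor X r k0)
        = (\<Sum>r<N+m. if r = a then X$$(a,s0) * cofactor X a k0 else if r = s0 then cofactor X s0 k0 else 0)"
    proof (rule sum.cong[OF refl])
      fix r assume r: "r \<in> {..<N+m}"
      show "X$$(r,s0) * cofactor X r k0
          = (if r = a then X$$(a,s0) * cofactor X a k0 else if r = s0 then cofactor X s0 k0 else 0)"
      proof (cases "r = a")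
        case False
        show ?thesis
        proof (cases "r < N")
          case True
          have "\<not> (\<exists>i'. isL N Fb (s0+1) (r+1) i')"
            using isL_unique[OF L] False a by auto
          then have "X$$(r,s0) = 0" unfolding X_def using XNL[OF True s0(1)] s0 Lt by auto
          then show ?thesis using False True s0 by auto
        next
          case False2: False
          then show ?thesis using XLL'[of r s0] s0 r False by auto
        qed
      qed (use a s0 in auto)
    qed
    moreover have "(\<Sum>r<N+m. if r = a then X$$(a,s0) * cofactor X a k0 else if r = s0 then cofactor X s0 k0 else 0)
        = X$$(a,s0) * cofactor X a k0 + cofactor X s0 k0"
    proof -
      have "(\<Sum>r<N+m. if r = a then X$$(a,s0) * cofactor X a k0 else if r = s0 then cofactor X s0 k0 else 0)
          = (\<Sum>r<N+m. (if r = a then X$$(a,s0) * cofactor X a k0 else 0) + (if r = s0 then cofactor X s0 k0 else 0))"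
        by (rule sum.cong[OF refl]) (use a s0 in auto)
      also have "\<dots> = X$$(a,s0) * cofactor X a k0 + cofactor X s0 k0"
        using a s0 by (simp add: sum.distrib)
      finally show ?thesis .
    qed
    moreover have "X$$(a,s0) = - (g * M)"
    proof -
      have "X$$(a,s0) = (if a = s0 then 1 else 0) - Gstar N \<beta> Fb (a+1) lam * Ment N \<alpha> p Fb (a+1) (s0+1)"
        unfolding X_def by (rule X_entry) (use a s0 Lt in auto)
      moreover have "s0 + 1 = Lidx N Fb j + i" using L unfolding isL_def by simp
      ultimately show ?thesis using a s0 j by (simp add: Gstar_def g_def M_def)
    qed
    ultimately have eq: "cofactor X s0 k0 = g * M * cofactor Y a k0"
      using cof[OF a(1) k0] by (simp add: algebra_simps)
    have e1: "Lidx N Fb j + i + k = (s0 + k0) + 2" using L k unfolding isL_def s0_def k0_def by auto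
    have e2: "j + k = (a + k0) + 2" using j k unfolding a_def k0_def by auto
    have p1: "(-1::real) ^ (Lidx N Fb j + i + k) = (-1) ^ (s0 + k0)" unfolding e1 by (simp only: power_add) simp
    have p2: "(-1::real) ^ (j + k) = (-1) ^ (a + k0)" unfolding e2 by (simp only: power_add) simp
    have eq': "(-1) ^ (s0 + k0) * det (mat_delete X s0 k0) = g * M * ((-1) ^ (a + k0) * det (mat_delete Y a k0))"
      using eq unfolding cofactor_def .
    have r1: "Lidx N Fb j + i - 1 = s0" "k - 1 = k0" "j - 1 = a" "Ment N \<alpha> p Fb j (Lidx N Fb j + i) = M"
      "Gexp_star \<beta> j lam = g" by (simp_all add: s0_def k0_def a_def M_def g_def)
    have r2: "(-1) ^ (a + k0) * M * g * det (mat_delete Y a k0) = g * M * ((-1) ^ (a + k0) * det (mat_delete Y a k0))"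
      by (simp only: mult.assoc mult.left_commute)
    show ?thesis unfolding p1 p2 r1 r2 by (rule eq')
  qed
  show ?thesis using c1 c2 c3 unfolding X_def Y_def by blast
qed

end
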